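(* Let $n,d\ge 1$. Let $W=(w_{i,j})$ and $\widetilde W=(\tilde w_{i,j})$ be real $n\times n$ matrices and let $G,\widetilde G$ be real $nd\times nd$ block matrices with $d\times d$ blocks $G_{i,j},\widetilde G_{i,j}$. Suppose that for some $\varepsilon,\eta\ge 0$, $$\sup_{i,j}|\tilde w_{i,j}-w_{i,j}|\le \varepsilon,\qquad \sup_{i,j}\|\widetilde G_{i,j}-G_{i,j}\|_F\le \eta,$$ and that there is $C>0$ with $0\le w_{i,j}\le C$ for all $i,j$, $\sup_{i,j}\|G_{i,j}\|_F\le C$ and $\sup_{i,j}\|\widetilde G_{i,j}\|_F\le C$. If $\inf_i \frac1n\sum_{j\neq i}w_{i,j}>\gamma$ and $\gamma>\varepsilon$, then $$\|L(W,G)-L(\widetilde W,\widetilde G)\|_{op}\le \frac{1}{\gamma}C(\eta+\varepsilon)+\frac{\varepsilon}{\gamma(\gamma-\varepsilon)}C^2 .$$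
   Context: For an $n\times n$ matrix $W=(w_{i,j})$ and an $nd\times nd$ block matrix $G$ with $d\times d$ blocks $G_{i,j}$, define $S$ as the $nd\times nd$ block matrix with blocks $S_{i,j}=w_{i,j}G_{i,j}$, and $D$ as the $nd\times nd$ block-diagonal matrix with diagonal blocks $D_{i,i}=\big(\sum_{j\neq i}w_{i,j}\big)\mathrm{I}_d$ (assumed invertible). Then $L(W,G):=D^{-1}S$. $\|\cdot\|_{op}$ is the largest singular value and $\|\cdot\|_F$ the Frobenius norm. *)

theory Defs
  imports "HOL-Analysis.Analysis"
begin

text \<open>An nd x nd block matrix is represented with row/column index type 'n \<times> 'd:
  entry ((i,a),(j,b)) is entry (a,b) of the d x d block (i,j).\<close>

definition block :: "real^('n::finite \<times> 'd::finite)^('n \<times> 'd) \<Rightarrow> 'n \<Rightarrow> 'n \<Rightarrow> real^'d^'d" where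
  "block G i j = (\<chi> a b. G $ (i,a) $ (j,b))"

definition frob_norm :: "real^'d::finite^'d \<Rightarrow> real" where
  "frob_norm A = sqrt (\<Sum>a\<in>UNIV. \<Sum>b\<in>UNIV. (A $ a $ b)^2)"

definition op_norm :: "real^'m::finite^'m \<Rightarrow> real" where
  "op_norm M = onorm (\<lambda>x. M *v x)"

definition S_mat :: "real^'n::finite^'n \<Rightarrow> real^('n \<times> 'd::finite)^('n \<times> 'd) \<Rightarrow> real^('n \<times> 'd)^('n \<times> 'd)" where
  "S_mat W G = (\<chi> p q. W $ fst p $ fst q * G $ p $ q)"

definition D_mat :: "real^'n::finite^'n \<Rightarrow> real^('n \<times> 'd::finite)^('n \<times> 'd)" where
  "D_mat W = (\<chi> p q. if p = q then (\<Sum>j\<in>UNIV - {fst p}. W $ fst p $ j) else 0)"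

definition L_mat :: "real^'n::finite^'n \<Rightarrow> real^('n \<times> 'd::finite)^('n \<times> 'd) \<Rightarrow> real^('n \<times> 'd)^('n \<times> 'd)" where
  "L_mat W G = matrix_inv (D_mat W) ** S_mat W G"

end

theory Submission
  imports Defs
begin


lemma key2:
  fixes N C e x :: real
  assumes N: "N \<ge> 2" and e: "0 \<le> e" "e \<le> C" and C: "C > 0" and x: "N*e \<le> x" "x \<le> (N-1)*C"
  shows "(N-1)^2 * ((C-2*e)*x + (N-1)*e^2 + (C+e)^2) \<le> N^3 * C^2"
proof (cases "2*e \<le> C")
  case True
  have "(C-2*e)*x \<le> (C-2*e)*((N-1)*C)" using True x by (intro mult_left_mono) auto
  moreover have "e^2 \<le> C*e/2" using mult_left_mono[OF True e(1)] by (simp add: power2_eq_square algebra_simps)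
  moreover have "(N-1)*e^2 \<le> (N-1)*(C*e/2)" using N \<open>e^2 \<le> C*e/2\<close> by (intro mult_left_mono) auto
  ultimately have "(C-2*e)*x + (N-1)*e^2 + (C+e)^2 \<le> N*C^2 + C*e*(4 - 3/2*N)"
    by (simp add: power2_eq_square algebra_simps)
  also have "\<dots> \<le> N*C^2 + C*e" using N C e mult_left_mono[of "4 - 3/2*N" 1 "C*e"] by simp
  also have "\<dots> \<le> (N+1/2)*C^2" using True C e by (simp add: power2_eq_square algebra_simps)
  finally have q: "(C-2*e)*x + (N-1)*e^2 + (C+e)^2 \<le> (N+1/2)*C^2" .
  have "(N-1)^2 * ((C-2*e)*x + (N-1)*e^2 + (C+e)^2) \<le> (N-1)^2 * ((N+1/2)*C^2)"
    by (rule mult_left_mono[OF q]) simp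
  also have "\<dots> = (N^3 - 3/2*N^2 + 1/2) * C^2" by (simp add: power2_eq_square power3_eq_cube algebra_simps)
  also have "\<dots> \<le> N^3 * C^2" using N mult_mono[of 2 N 2 N] by (intro mult_right_mono) (auto simp: power2_eq_square)
  finally show ?thesis .
next
  case False
  have "(C-2*e)*x \<le> (C-2*e)*(N*e)" using False x by (intro mult_left_mono_neg) auto
  moreover have "4*(e*(C-e)) \<le> C^2"
  proof -
    have "0 \<le> (C-2*e)^2" by simp
    then show ?thesis by (simp add: power2_eq_square algebra_simps)
  qed
  moreover have "C*e \<le> C*C" using e C by simp
  ultimately have "(C-2*e)*x + (N-1)*e^2 + (C+e)^2 \<le> N*(e*(C-e)) + 3*C^2"
    by (simp add: power2_eq_square algebra_simps)
  also have "\<dots> \<le> (N/4+3)*C^2"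
  proof -
    have "N*(4*(e*(C-e))) \<le> N*C^2" using \<open>4*(e*(C-e)) \<le> C^2\<close> N by (intro mult_left_mono) auto
    then show ?thesis by (simp add: algebra_simps)
  qed
  finally have q: "(C-2*e)*x + (N-1)*e^2 + (C+e)^2 \<le> (N/4+3)*C^2" .
  have "(N-1)^2 * ((C-2*e)*x + (N-1)*e^2 + (C+e)^2) \<le> (N-1)^2 * ((N/4+3)*C^2)"
    by (rule mult_left_mono[OF q]) simp
  also have "\<dots> = ((N-1)^2*(N+12)/4) * C^2" by (simp add: power2_eq_square algebra_simps)
  also have "\<dots> \<le> N^3 * C^2"
  proof (intro mult_right_mono)
    have "(N-1)^2*(N+12) = N^3 + 10*N^2 - 23*N + 12" by (simp add: power2_eq_square power3_eq_cube algebra_simps)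
    also have "\<dots> \<le> 4*N^3"
    proof -
      have "3*N^3 - 10*N^2 + 23*N - 12 = N*(3*(N-5/3)^2 + 23 - 25/3) - 12"
        by (simp add: power2_eq_square power3_eq_cube algebra_simps)
      moreover have "N*(3*(N-5/3)^2 + 23 - 25/3) \<ge> 2*(23-25/3)"
      proof -
        have "3*(N-5/3)^2 + 23 - 25/3 \<ge> 23 - 25/3" by simp
        then have "N*(3*(N-5/3)^2 + 23 - 25/3) \<ge> N*(23-25/3)" using N by (intro mult_left_mono) auto
        moreover have "N*(23-25/3) \<ge> 2*(23-25/3)" using N by simp
        ultimately show ?thesis by linarith
      qed
      ultimately show ?thesis by simp
    qed
    finally show "(N-1)^2*(N+12)/4 \<le> N^3" by simp
  qed simp
  finally show ?thesis .
qed

lemma h1_lemma: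
  fixes N C e x :: real
  assumes N: "N \<ge> 2" and e: "0 \<le> e" and C: "C > 0" and x: "0 \<le> x" "x \<le> (N-1)*C"
  shows "(N-1)*(C+e)*(x-N*e) \<le> N*C*x"
proof -
  have "(N-1)*e*x - C*x \<le> N*(N-1)*e*(C+e)"
  proof (cases "(N-1)*e \<le> C")
    case True
    have "(N-1)*e*x \<le> C*x" using True x by (intro mult_right_mono) auto
    moreover have "0 \<le> N*(N-1)*e*(C+e)" using N e C by simp
    ultimately show ?thesis by linarith
  next
    case False
    have "x*((N-1)*e - C) \<le> ((N-1)*C)*((N-1)*e - C)" using False x by (intro mult_right_mono) auto
    moreover have "(N-1)*((N-1)*C*e - C^2) \<le> (N-1)*(N*C*e + N*e^2)"
    proof (intro mult_left_mono)
      have "(N-1)*C*e \<le> N*C*e" using C e by (simp add: mult_right_mono)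
      moreover have "0 \<le> N*e^2" using N by simp
      moreover have "0 \<le> C^2" by simp
      ultimately show "(N-1)*C*e - C^2 \<le> N*C*e + N*e^2" by linarith
    qed (use N in auto)
    ultimately show ?thesis by (simp add: algebra_simps power2_eq_square)
  qed
  then show ?thesis by (simp add: algebra_simps)
qed

lemma P_lemma:
  fixes N C e x dl S :: real
  assumes N: "N \<ge> 2" and e: "e \<ge> 0" and C: "C > 0" and x: "N*e < x" "x \<le> (N-1)*C"
    and dl: "\<bar>dl\<bar> \<le> (N-1)*e" and S: "0 \<le> S" "S \<le> N*(C+e)^2"
    "S \<le> (C-2*e)*x + 2*C*(dl + (N-1)*e) + (N-1)*e^2 + (C+e)^2"
  shows "dl^2 * S * (x-N*e)^2 \<le> N^3*e^2*C^2*(x+dl)^2"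
proof -
  have eC: "e \<le> C"
  proof -
    have "(N-1)*C = N*C - C" by (simp add: algebra_simps)
    then have "N*e < N*C" using x C by linarith
    then show ?thesis using N by simp
  qed
  show ?thesis
  proof (cases "dl \<ge> 0")
    case True
    have "0 \<le> N*e" using N e by simp
    then have xpos: "0 \<le> x" using x by linarith
    have h1: "(N-1)*(C+e)*(x-N*e) \<le> N*C*x" by (rule h1_lemma[OF N e C xpos x(2)])
    have nn: "0 \<le> (C+e)*(x-N*e)" using C e x by simp
    have "dl*((C+e)*(x-N*e)) \<le> ((N-1)*e)*((C+e)*(x-N*e))" using dl True nn by (intro mult_right_mono) auto
    also have "\<dots> = e*((N-1)*(C+e)*(x-N*e))" by (simp add: algebra_simps)
    also have "\<dots> \<le> e*(N*C*x)" using h1 e by (intro mult_left_mono) auto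
    also have "\<dots> \<le> N*e*C*(x+dl)" using True N e C by (simp add: algebra_simps)
    finally have h2: "dl*(C+e)*(x-N*e) \<le> N*e*C*(x+dl)" by (simp add: algebra_simps)
    have h2': "(dl*(C+e)*(x-N*e))^2 \<le> (N*e*C*(x+dl))^2"
      using h2 True nn by (intro power_mono) (auto simp: mult.assoc)
    have "dl^2 * S * (x-N*e)^2 \<le> dl^2 * (N*(C+e)^2) * (x-N*e)^2"
      using S by (intro mult_right_mono mult_left_mono) auto
    also have "\<dots> = N * (dl*(C+e)*(x-N*e))^2" by (simp add: power_mult_distrib)
    also have "\<dots> \<le> N * (N*e*C*(x+dl))^2" using h2' N by (intro mult_left_mono) auto
    also have "\<dots> = N^3*e^2*C^2*(x+dl)^2" by (simp add: power_mult_distrib power2_eq_square power3_eq_cube)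
    finally show ?thesis .
  next
    case False
    define s where "s = -dl"
    define u where "u = (N-1)*e - s"
    define z where "z = x - N*e"
    define Q0 where "Q0 = (C-2*e)*x + (N-1)*e^2 + (C+e)^2"
    have s0: "0 \<le> s" "s \<le> (N-1)*e" using False dl by (auto simp: s_def)
    have u0: "0 \<le> u" using s0 by (simp add: u_def)
    have Ne0: "0 \<le> N*e" using N e by simp
    have z0: "0 \<le> z" "z \<le> (N-1)*C" using x Ne0 by (auto simp: z_def)
    have "Q0 + 2*C*u = (C-2*e)*x + 2*C*(dl + (N-1)*e) + (N-1)*e^2 + (C+e)^2"
      by (simp add: Q0_def u_def s_def algebra_simps)
    then have SQ: "S \<le> Q0 + 2*C*u" using S(3) by linarith
    have k2: "(N-1)^2 * Q0 \<le> N^3*C^2" unfolding Q0_def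
      by (rule key2[OF N e eC C]) (use x in auto)
    have Q0pos: "0 \<le> Q0 + 2*C*u" using S SQ by linarith
    have ss: "s^2 \<le> ((N-1)*e)^2" using s0 by (intro power_mono) auto
    have dl2: "dl^2 = s^2" by (simp add: s_def)
    have zz: "(N-1)^2 * z \<le> N^3 * C"
    proof -
      have "(N-1)^2 * z \<le> (N-1)^2 * ((N-1)*C)" using z0 by (intro mult_left_mono) auto
      also have "\<dots> = (N-1)^3 * C" by (simp add: power2_eq_square power3_eq_cube)
      also have "\<dots> \<le> N^3 * C" using C N by (intro mult_right_mono power_mono) auto
      finally show ?thesis .
    qed
    have "dl^2 * S * (x-N*e)^2 = s^2 * S * z^2" by (simp add: dl2 z_def)
    also have "\<dots> \<le> ((N-1)*e)^2 * (Q0 + 2*C*u) * z^2"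
      using ss SQ S Q0pos by (intro mult_right_mono mult_mono) auto
    also have "\<dots> = e^2 * ((N-1)^2 * Q0 * z^2 + 2*C*u*z*((N-1)^2*z))"
      by (simp add: power2_eq_square algebra_simps)
    also have "\<dots> \<le> e^2 * (N^3*C^2*z^2 + 2*C*u*z*(N^3*C))"
    proof (rule mult_left_mono, rule add_mono)
      show "(N-1)^2 * Q0 * z^2 \<le> N^3*C^2*z^2" using k2 by (intro mult_right_mono) auto
      show "2*C*u*z*((N-1)^2*z) \<le> 2*C*u*z*(N^3*C)" using zz C u0 z0 by (intro mult_left_mono) auto
    qed auto
    also have "\<dots> \<le> e^2 * (N^3*C^2*(z+e+u)^2)"
    proof (intro mult_left_mono)
      have "z^2 + 2*u*z \<le> (z+e+u)^2" using u0 z0 e by (simp add: power2_eq_square algebra_simps)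
      then have "N^3*C^2*(z^2 + 2*u*z) \<le> N^3*C^2*(z+e+u)^2" using N by (intro mult_left_mono) auto
      then show "N^3*C^2*z^2 + 2*C*u*z*(N^3*C) \<le> N^3*C^2*(z+e+u)^2" by (simp add: algebra_simps power2_eq_square)
    qed auto
    also have "\<dots> = N^3*e^2*C^2*(x+dl)^2" by (simp add: z_def u_def s_def algebra_simps)
    finally show ?thesis .
  qed
qed

lemma row_ineq:
  fixes N C e g x dl S :: real
  assumes N: "N \<ge> 2" and e: "e \<ge> 0" and C: "C > 0" and g: "g > e" and x: "N*g < x" "x \<le> (N-1)*C"
    and dl: "\<bar>dl\<bar> \<le> (N-1)*e" and S: "0 \<le> S" "S \<le> N*(C+e)^2"
    "S \<le> (C-2*e)*x + 2*C*(dl + (N-1)*e) + (N-1)*e^2 + (C+e)^2"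
  shows "dl^2 * S / (x^2 * (x+dl)^2) \<le> e^2*C^2/(N*g^2*(g-e)^2)"
proof -
  have Ng: "N*e < N*g" using g N by simp
  have x1: "N*e < x" using Ng x by linarith
  have P: "dl^2 * S * (x-N*e)^2 \<le> N^3*e^2*C^2*(x+dl)^2" by (rule P_lemma[OF N e C x1 x(2) dl S])
  have Ne0: "0 \<le> N*e" using N e by simp
  have xp: "x > 0" using x1 Ne0 by linarith
  have "(N-1)*e \<le> N*e" using e by (simp add: algebra_simps)
  then have xd: "x + dl > 0" using dl x1 by linarith
  have xn: "x - N*e > 0" using x1 by simp
  have "dl^2 * S / (x^2 * (x+dl)^2) = (dl^2*S*(x-N*e)^2)/(x^2*(x+dl)^2*(x-N*e)^2)"
    using xn by simp
  also have "\<dots> \<le> (N^3*e^2*C^2*(x+dl)^2)/(x^2*(x+dl)^2*(x-N*e)^2)"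
    by (rule divide_right_mono[OF P]) simp
  also have "\<dots> = N^3*e^2*C^2/(x^2*(x-N*e)^2)" using xd by simp
  finally have A: "dl^2 * S / (x^2 * (x+dl)^2) \<le> N^3*e^2*C^2/(x^2*(x-N*e)^2)" .
  have gp: "g > 0" "g - e > 0" using g e by auto
  have "N*g*(N*(g-e)) \<le> x*(x-N*e)"
    using x Ng gp N xp by (intro mult_mono) (auto simp: algebra_simps)
  then have B: "(N*g*(N*(g-e)))^2 \<le> (x*(x-N*e))^2" using gp N by (intro power_mono) auto
  have "N^3*e^2*C^2/(x^2*(x-N*e)^2) \<le> e^2*C^2/(N*g^2*(g-e)^2)"
  proof -
    have "N^3*e^2*C^2/(x^2*(x-N*e)^2) = (e^2*C^2) * (N^3/(x*(x-N*e))^2)" by (simp add: power_mult_distrib)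
    also have "\<dots> \<le> (e^2*C^2) * (N^3/(N*g*(N*(g-e)))^2)"
      using B gp N xp xn by (intro mult_left_mono divide_left_mono) auto
    also have "\<dots> = e^2*C^2/(N*g^2*(g-e)^2)"
    proof -
      have "(N*g*(N*(g-e)))^2 = N^3 * (N*g^2*(g-e)^2)" by (simp add: power2_eq_square power3_eq_cube algebra_simps)
      moreover have "N^3 \<noteq> 0" using N by simp
      ultimately show ?thesis by simp
    qed
    finally show ?thesis .
  qed
  with A show ?thesis by linarith
qed



lemma norm_vec_sq: "(norm (v::real^'m))^2 = (\<Sum>i\<in>UNIV. (v$i)^2)"
  by (simp add: norm_vec_def L2_set_def sum_nonneg)

lemma norm_mat_sq: "(norm (M::real^'m^'k))^2 = (\<Sum>p\<in>UNIV. \<Sum>q\<in>UNIV. (M$p$q)^2)"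
proof -
  have "(norm M)^2 = (\<Sum>p\<in>UNIV. (norm (M$p))^2)"
    by (simp add: norm_vec_def L2_set_def sum_nonneg)
  also have "\<dots> = (\<Sum>p\<in>UNIV. \<Sum>q\<in>UNIV. (M$p$q)^2)" by (simp add: norm_vec_sq)
  finally show ?thesis .
qed

lemma norm_mv_le: "norm ((M::real^'m^'k) *v x) \<le> norm M * norm x"
proof (rule power2_le_imp_le)
  have "(norm (M *v x))^2 = (\<Sum>p\<in>UNIV. ((M$p) \<bullet> x)^2)"
    by (simp add: norm_vec_sq matrix_vector_mult_def inner_vec_def)
  also have "\<dots> \<le> (\<Sum>p\<in>UNIV. (norm (M$p))^2 * (norm x)^2)"
  proof (rule sum_mono)
    fix p
    have "\<bar>(M$p) \<bullet> x\<bar> \<le> norm (M$p) * norm x" by (rule Cauchy_Schwarz_ineq2)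
    then have "\<bar>(M$p) \<bullet> x\<bar>^2 \<le> (norm (M$p) * norm x)^2" by (intro power_mono) auto
    then show "((M$p) \<bullet> x)^2 \<le> (norm (M$p))^2 * (norm x)^2" by (simp add: power_mult_distrib)
  qed
  also have "\<dots> = (norm M * norm x)^2"
    by (simp add: sum_distrib_right[symmetric] power_mult_distrib norm_vec_def L2_set_def sum_nonneg)
  finally show "(norm (M *v x))^2 \<le> (norm M * norm x)^2" .
qed simp

lemma op_norm_le_norm: "op_norm (M::real^'m^'m) \<le> norm M"
  unfolding op_norm_def by (rule onorm_le) (rule norm_mv_le)

lemma sum_pair: "sum f (UNIV :: ('a::finite \<times> 'b::finite) set) = (\<Sum>i\<in>UNIV. \<Sum>a\<in>UNIV. f (i,a))"
proof -
  have "sum f (UNIV :: ('a \<times> 'b) set) = sum f (UNIV \<times> UNIV)" by simp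
  also have "\<dots> = (\<Sum>i\<in>UNIV. \<Sum>a\<in>UNIV. f (i,a))" by (simp add: sum.cartesian_product)
  finally show ?thesis .
qed

lemma frob_sq: "(frob_norm (block K i j))^2 = (\<Sum>a\<in>UNIV. \<Sum>b\<in>UNIV. (K$(i,a)$(j,b))^2)"
  by (simp add: frob_norm_def block_def sum_nonneg)

lemma norm_block_sq:
  fixes K :: "real^('n::finite \<times> 'd::finite)^('n \<times> 'd)" and c :: "'n \<Rightarrow> 'n \<Rightarrow> real"
  shows "(norm (\<chi> p q. c (fst p) (fst q) * K$p$q))^2
     = (\<Sum>i\<in>UNIV. \<Sum>j\<in>UNIV. (c i j)^2 * (frob_norm (block K i j))^2)"
proof -
  have "(norm (\<chi> p q. c (fst p) (fst q) * K$p$q))^2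
      = (\<Sum>i\<in>UNIV. \<Sum>a\<in>UNIV. \<Sum>j\<in>UNIV. \<Sum>b\<in>UNIV. (c i j * K$(i,a)$(j,b))^2)"
  proof -
    have "(norm (\<chi> p q. c (fst p) (fst q) * K$p$q))^2 = (\<Sum>p\<in>UNIV. \<Sum>q\<in>UNIV. (c (fst p) (fst q) * K$p$q)^2)"
      unfolding norm_mat_sq by simp
    also have "\<dots> = (\<Sum>i\<in>UNIV. \<Sum>a\<in>UNIV. \<Sum>q\<in>UNIV. (c i (fst q) * K$(i,a)$q)^2)"
      using sum_pair[of "\<lambda>p. \<Sum>q\<in>UNIV. (c (fst p) (fst q) * K$p$q)^2"] by simp
    also have "\<dots> = (\<Sum>i\<in>UNIV. \<Sum>a\<in>UNIV. \<Sum>j\<in>UNIV. \<Sum>b\<in>UNIV. (c i j * K$(i,a)$(j,b))^2)"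
    proof (intro sum.cong refl)
      fix i a
      show "(\<Sum>q\<in>UNIV. (c i (fst q) * K$(i,a)$q)^2) = (\<Sum>j\<in>UNIV. \<Sum>b\<in>UNIV. (c i j * K$(i,a)$(j,b))^2)"
        using sum_pair[of "\<lambda>q. (c i (fst q) * K$(i,a)$q)^2"] by simp
    qed
    finally show ?thesis .
  qed
  also have "\<dots> = (\<Sum>i\<in>UNIV. \<Sum>j\<in>UNIV. \<Sum>a\<in>UNIV. \<Sum>b\<in>UNIV. (c i j)^2 * (K$(i,a)$(j,b))^2)"
  proof (rule sum.cong[OF refl])
    fix i
    show "(\<Sum>a\<in>UNIV. \<Sum>j\<in>UNIV. \<Sum>b\<in>UNIV. (c i j * K$(i,a)$(j,b))^2)
        = (\<Sum>j\<in>UNIV. \<Sum>a\<in>UNIV. \<Sum>b\<in>UNIV. (c i j)^2 * (K$(i,a)$(j,b))^2)"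
      by (subst sum.swap) (simp add: power_mult_distrib)
  qed
  also have "\<dots> = (\<Sum>i\<in>UNIV. \<Sum>j\<in>UNIV. (c i j)^2 * (frob_norm (block K i j))^2)"
    by (simp add: frob_sq sum_distrib_left)
  finally show ?thesis .
qed

lemma norm_block_le:
  fixes K :: "real^('n::finite \<times> 'd::finite)^('n \<times> 'd)" and c :: "'n \<Rightarrow> 'n \<Rightarrow> real"
  assumes "\<And>i j. \<bar>c i j\<bar> \<le> a" "\<And>i j. frob_norm (block K i j) \<le> k" "0 \<le> k"
  shows "norm (\<chi> p q. c (fst p) (fst q) * K$p$q) \<le> real CARD('n) * a * k"
proof (rule power2_le_imp_le)
  have a0: "0 \<le> a" using assms(1) by (meson abs_ge_zero order_trans)
  have "(norm (\<chi> p q. c (fst p) (fst q) * K$p$q))^2 \<le> (\<Sum>i\<in>(UNIV::'n set). \<Sum>j\<in>(UNIV::'n set). a^2 * k^2)"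
    unfolding norm_block_sq
  proof (intro sum_mono mult_mono)
    fix i j
    have "\<bar>c i j\<bar> \<le> \<bar>a\<bar>" using assms(1)[of i j] a0 by simp
    then show "(c i j)^2 \<le> a^2" by (simp add: abs_le_square_iff)
    have "0 \<le> frob_norm (block K i j)" by (simp add: frob_norm_def sum_nonneg)
    then show "(frob_norm (block K i j))^2 \<le> k^2" using assms(2)[of i j] by (intro power_mono) auto
  qed auto
  also have "\<dots> = (real CARD('n) * a * k)^2" by (simp add: power2_eq_square)
  finally show "(norm (\<chi> p q. c (fst p) (fst q) * K$p$q))^2 \<le> (real CARD('n) * a * k)^2" .
  show "0 \<le> real CARD('n) * a * k" using a0 assms(3) by simp
qed

lemma ifmul: "(if P then a else (0::real)) * b = (if P then a * b else 0)" by simp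
lemma ifmul2: "b * (if P then a else (0::real)) = (if P then b * a else 0)" by simp

lemma diag_inv:
  fixes f :: "'m::finite \<Rightarrow> real" assumes f: "\<And>p. f p \<noteq> 0"
  shows "matrix_inv (\<chi> p q. if p = q then f p else 0) = (\<chi> p q. if p = q then 1 / f p else 0)"
proof -
  define A where "A = (\<chi> p q. if p = q then f p else 0)"
  define B where "B = (\<chi> p q. if p = q then 1 / f p else 0)"
  have AB: "A ** B = mat 1" "B ** A = mat 1"
    using f by (auto simp: A_def B_def vec_eq_iff matrix_matrix_mult_def mat_def ifmul ifmul2)
  have "A ** matrix_inv A = mat 1 \<and> matrix_inv A ** A = mat 1"
    unfolding matrix_inv_def by (rule someI[where x=B]) (use AB in simp)
  then have X: "A ** matrix_inv A = mat 1" by simp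
  have "B = B ** (A ** matrix_inv A)" by (simp add: X matrix_mul_rid)
  also have "\<dots> = matrix_inv A" by (simp add: matrix_mul_assoc AB matrix_mul_lid)
  finally show ?thesis by (simp add: A_def B_def)
qed

lemma diag_mult:
  fixes f :: "'m::finite \<Rightarrow> real"
  shows "(\<chi> p q. if p = q then 1 / f p else 0) ** S = (\<chi> p q. S$p$q / f p)"
  by (simp add: vec_eq_iff matrix_matrix_mult_def ifmul)

lemma L_formula:
  fixes W :: "real^'n::finite^'n" and G :: "real^('n \<times> 'd::finite)^('n \<times> 'd)"
  assumes "\<And>i. (\<Sum>j\<in>UNIV - {i}. W$i$j) \<noteq> 0"
  shows "L_mat W G = (\<chi> p q. W$fst p$fst q * G$p$q / (\<Sum>j\<in>UNIV - {fst p}. W$fst p$j))"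
proof -
  have Deq: "D_mat W = (\<chi> p q. if p = q then (\<Sum>j\<in>UNIV - {fst p}. W$fst p$j) else 0)"
    by (simp add: D_mat_def)
  have inv: "matrix_inv (D_mat W) = (\<chi> p q. if p = q then 1 / (\<Sum>j\<in>UNIV - {fst p}. W$fst p$j) else 0)"
    unfolding Deq by (rule diag_inv) (use assms in simp)
  show ?thesis by (simp add: L_mat_def inv diag_mult S_mat_def)
qed

lemma line_bound:
  fixes w t C e :: real
  assumes "0 \<le> w" "w \<le> C" "\<bar>t\<bar> \<le> e"
  shows "(w+t)^2 \<le> (C-2*e)*w + 2*C*t + e^2 + 2*C*e"
proof -
  have "0 \<le> (C-w)*(w+2*t+2*e)" using assms by (intro mult_nonneg_nonneg) auto
  moreover have "t^2 \<le> e^2"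
  proof -
    have "\<bar>t\<bar> \<le> \<bar>e\<bar>" using assms(3) by simp
    then show ?thesis by (simp add: abs_le_square_iff)
  qed
  moreover have "(C-2*e)*w + 2*C*t + e^2 + 2*C*e - (w+t)^2 = (C-w)*(w+2*t+2*e) + (e^2 - t^2)"
    by (simp add: power2_eq_square algebra_simps)
  ultimately show ?thesis by linarith
qed



lemma block_diff: "block (A - B) i j = block A i j - block B i j"
  by (simp add: block_def vec_eq_iff)

lemma decomp_scalar:
  fixes w w' g g' d d' :: real
  assumes "d \<noteq> 0" "d' \<noteq> 0"
  shows "w*g/d - w'*g'/d' = -(w/d)*(g'-g) + -((w'-w)/d)*g' + w'*(d'-d)/(d*d')*g'"
  using assms by (simp add: field_simps)

lemma aux_eq:
  fixes N h g C e :: real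
  assumes "N > 0" "h > 0" "g > 0"
  shows "N*(C^2*(e^2*C^2/(N*g^2*h^2))) = (e*C^2/(g*h))^2"
  using assms by (simp add: power2_eq_square field_simps)

theorem lemma2p1:
  fixes W W' :: "real^'n::finite^'n"
    and G G' :: "real^('n \<times> 'd::finite)^('n \<times> 'd)"
    and \<epsilon> \<eta> C \<gamma> :: real
  assumes "\<epsilon> \<ge> 0" and "\<eta> \<ge> 0"
    and "\<forall>i j. \<bar>W' $ i $ j - W $ i $ j\<bar> \<le> \<epsilon>"
    and "\<forall>i j. frob_norm (block G' i j - block G i j) \<le> \<eta>"
    and "C > 0"
    and "\<forall>i j. 0 \<le> W $ i $ j \<and> W $ i $ j \<le> C"
    and "\<forall>i j. frob_norm (block G i j) \<le> C"
    and "\<forall>i j. frob_norm (block G' i j) \<le> C"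
    and "\<forall>i. (1 / real CARD('n)) * (\<Sum>j\<in>UNIV - {i}. W $ i $ j) > \<gamma>"
    and "\<gamma> > \<epsilon>"
  shows "op_norm (L_mat W G - L_mat W' G')
           \<le> (1 / \<gamma>) * C * (\<eta> + \<epsilon>) + \<epsilon> / (\<gamma> * (\<gamma> - \<epsilon>)) * C^2"
proof -
  note e0 = assms(1) and eta0 = assms(2) and Wd = assms(3) and Gd = assms(4) and C0 = assms(5)
    and Wb = assms(6) and Gb = assms(7) and G'b = assms(8) and gam = assms(9) and ge = assms(10)
  define N where "N = real CARD('n)"
  define d where "d i = (\<Sum>j\<in>UNIV - {i}. W$i$j)" for i
  define d' where "d' i = (\<Sum>j\<in>UNIV - {i}. W'$i$j)" for i
  have g0: "\<gamma> > 0" using e0 ge by linarith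
  have Npos: "N > 0" by (simp add: N_def)
  have card1: "card (UNIV - {i::'n}) = CARD('n) - 1" for i by (simp add: card_Diff_singleton)
  have N1: "CARD('n) \<ge> 1" by (simp add: Suc_leI)
  have Nm1: "real (card (UNIV - {i::'n})) = N - 1" for i using card1 N1 by (simp add: N_def of_nat_diff)
  have dg: "N*\<gamma> < d i" for i
  proof -
    have "\<gamma> < (1/N) * d i" using gam by (simp add: N_def d_def)
    then show ?thesis using Npos by (simp add: field_simps)
  qed
  have N2: "N \<ge> 2"
  proof (rule ccontr)
    assume "\<not> N \<ge> 2"
    then have "CARD('n) < 2" by (simp add: N_def)
    then have "CARD('n) = 1" using N1 by linarith
    then have c0: "card (UNIV - {undefined::'n}) = 0" using card1 by simp
    have fin: "finite (UNIV - {undefined::'n})" by simp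
    have emp: "UNIV - {undefined::'n} = {}" using card_0_eq[OF fin] c0 by simp
    have "d undefined = 0" unfolding d_def by (simp only: emp sum.empty)
    moreover have "N*\<gamma> > 0" using Npos g0 by simp
    ultimately show False using dg[of undefined] by simp
  qed
  have dC: "d i \<le> (N-1)*C" for i
  proof -
    have "d i \<le> real (card (UNIV - {i})) * C" unfolding d_def
      by (rule sum_bounded_above) (use Wb in auto)
    then show ?thesis by (simp add: Nm1 N_def)
  qed
  have ddiff: "d' i - d i = (\<Sum>j\<in>UNIV - {i}. W'$i$j - W$i$j)" for i
    by (simp add: d_def d'_def sum_subtractf)
  have dl: "\<bar>d' i - d i\<bar> \<le> (N-1)*\<epsilon>" for i
  proof -
    have "\<bar>d' i - d i\<bar> \<le> (\<Sum>j\<in>UNIV - {i}. \<bar>W'$i$j - W$i$j\<bar>)" unfolding ddiff by (rule sum_abs)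
    also have "\<dots> \<le> real (card (UNIV - {i})) * \<epsilon>" by (rule sum_bounded_above) (use Wd in auto)
    finally show ?thesis by (simp add: Nm1 N_def)
  qed
  have Ng0: "N*\<gamma> > 0" using Npos g0 by simp
  have dpos: "d i > 0" for i using dg[of i] Ng0 by linarith
  have d'pos: "d' i > 0" for i
  proof -
    have "N*\<epsilon> \<le> N*\<gamma>" using ge Npos by simp
    moreover have "(N-1)*\<epsilon> = N*\<epsilon> - \<epsilon>" by (simp add: algebra_simps)
    ultimately show ?thesis using dl[of i] dg[of i] e0 by linarith
  qed
  have dn: "(\<Sum>j\<in>UNIV - {i}. W$i$j) \<noteq> 0" for i using dpos[of i] unfolding d_def by linarith
  have dn': "(\<Sum>j\<in>UNIV - {i}. W'$i$j) \<noteq> 0" for i using d'pos[of i] unfolding d'_def by linarith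
  have LW: "L_mat W G = (\<chi> p q. W$fst p$fst q * G$p$q / d (fst p))"
    unfolding d_def by (rule L_formula) (rule dn)
  have LW': "L_mat W' G' = (\<chi> p q. W'$fst p$fst q * G'$p$q / d' (fst p))"
    unfolding d'_def by (rule L_formula) (rule dn')
  define cA where "cA i j = -(W$i$j / d i)" for i j
  define cB where "cB i j = -((W'$i$j - W$i$j) / d i)" for i j
  define cE where "cE i j = W'$i$j * (d' i - d i) / (d i * d' i)" for i j
  define XA where "XA = (\<chi> p q. cA (fst p) (fst q) * (G' - G)$p$q)"
  define XB where "XB = (\<chi> p q. cB (fst p) (fst q) * G'$p$q)"
  define XE where "XE = (\<chi> p q. cE (fst p) (fst q) * G'$p$q)"
  have dec: "L_mat W G - L_mat W' G' = XA + XB + XE"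
    unfolding LW LW' XA_def XB_def XE_def cA_def cB_def cE_def
    using dpos d'pos by (simp add: vec_eq_iff decomp_scalar less_imp_neq[symmetric])
  have nA: "norm XA \<le> N * (C/(N*\<gamma>)) * \<eta>" unfolding XA_def N_def
  proof (rule norm_block_le)
    fix i j
    have "\<bar>cA i j\<bar> = W$i$j / d i" using Wb dpos[of i] by (simp add: cA_def)
    also have "\<dots> \<le> C / d i" using Wb dpos[of i] by (simp add: divide_right_mono)
    also have "\<dots> \<le> C / (real CARD('n) * \<gamma>)" using dg[of i] C0 dpos[of i] Ng0 by (intro divide_left_mono) (auto simp: N_def)
    finally show "\<bar>cA i j\<bar> \<le> C / (real CARD('n) * \<gamma>)" .
    show "frob_norm (block (G' - G) i j) \<le> \<eta>" using Gd by (simp add: block_diff)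
  qed (use eta0 in auto)
  have nB: "norm XB \<le> N * (\<epsilon>/(N*\<gamma>)) * C" unfolding XB_def N_def
  proof (rule norm_block_le)
    fix i j
    have "\<bar>cB i j\<bar> = \<bar>W'$i$j - W$i$j\<bar> / d i" using dpos[of i] by (simp add: cB_def)
    also have "\<dots> \<le> \<epsilon> / d i" using Wd dpos[of i] by (simp add: divide_right_mono)
    also have "\<dots> \<le> \<epsilon> / (real CARD('n) * \<gamma>)" using dg[of i] e0 dpos[of i] Ng0 by (intro divide_left_mono) (auto simp: N_def)
    finally show "\<bar>cB i j\<bar> \<le> \<epsilon> / (real CARD('n) * \<gamma>)" .
    show "frob_norm (block G' i j) \<le> C" using G'b by simp
  qed (use C0 in auto)
  define S2 where "S2 i = (\<Sum>j\<in>UNIV. (W'$i$j)^2)" for i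
  have W'abs: "\<bar>W'$i$j\<bar> \<le> C + \<epsilon>" for i j
  proof -
    have a: "\<bar>W'$i$j - W$i$j\<bar> \<le> \<epsilon>" "0 \<le> W$i$j" "W$i$j \<le> C" using Wd Wb by auto
    then show ?thesis unfolding abs_le_iff by linarith
  qed
  have S2a: "S2 i \<le> N*(C+\<epsilon>)^2" for i
  proof -
    have "S2 i \<le> real (card (UNIV::'n set)) * (C+\<epsilon>)^2" unfolding S2_def
    proof (rule sum_bounded_above)
      fix j
      have "\<bar>W'$i$j\<bar> \<le> \<bar>C+\<epsilon>\<bar>" using W'abs[of i j] by simp
      then show "(W'$i$j)^2 \<le> (C+\<epsilon>)^2" by (simp add: abs_le_square_iff)
    qed
    then show ?thesis by (simp add: N_def)
  qed
  have S2b: "S2 i \<le> (C-2*\<epsilon>)*d i + 2*C*((d' i - d i) + (N-1)*\<epsilon>) + (N-1)*\<epsilon>^2 + (C+\<epsilon>)^2" for i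
  proof -
    have split: "S2 i = (W'$i$i)^2 + (\<Sum>j\<in>UNIV - {i}. (W'$i$j)^2)"
      unfolding S2_def by (simp add: sum.remove)
    have diag: "(W'$i$i)^2 \<le> (C+\<epsilon>)^2"
    proof -
      have "\<bar>W'$i$i\<bar> \<le> \<bar>C+\<epsilon>\<bar>" using W'abs[of i i] by simp
      then show ?thesis by (simp add: abs_le_square_iff)
    qed
    have "(\<Sum>j\<in>UNIV - {i}. (W'$i$j)^2)
        \<le> (\<Sum>j\<in>UNIV - {i}. (C-2*\<epsilon>)*W$i$j + 2*C*(W'$i$j - W$i$j) + (\<epsilon>^2 + 2*C*\<epsilon>))"
    proof (rule sum_mono)
      fix j
      have "(W$i$j + (W'$i$j - W$i$j))^2 \<le> (C-2*\<epsilon>)*W$i$j + 2*C*(W'$i$j - W$i$j) + \<epsilon>^2 + 2*C*\<epsilon>"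
        by (rule line_bound) (use Wb Wd in auto)
      then show "(W'$i$j)^2 \<le> (C-2*\<epsilon>)*W$i$j + 2*C*(W'$i$j - W$i$j) + (\<epsilon>^2 + 2*C*\<epsilon>)" by simp
    qed
    also have "\<dots> = (C-2*\<epsilon>)*d i + 2*C*(d' i - d i) + (N-1)*(\<epsilon>^2 + 2*C*\<epsilon>)"
      by (simp add: sum.distrib sum_distrib_left[symmetric] d_def d'_def sum_subtractf Nm1 N_def)
    finally show ?thesis using split diag by (simp add: algebra_simps)
  qed
  have row: "(d' i - d i)^2 * S2 i / ((d i)^2 * (d i + (d' i - d i))^2) \<le> \<epsilon>^2*C^2/(N*\<gamma>^2*(\<gamma>-\<epsilon>)^2)" for i
    by (rule row_ineq[OF N2 e0 C0 ge dg dC dl]) (use S2a S2b in \<open>auto simp: S2_def sum_nonneg\<close>)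
  have nE2: "(norm XE)^2 \<le> (\<epsilon>*C^2/(\<gamma>*(\<gamma>-\<epsilon>)))^2"
  proof -
    have "(norm XE)^2 = (\<Sum>i\<in>UNIV. \<Sum>j\<in>UNIV. (cE i j)^2 * (frob_norm (block G' i j))^2)"
      unfolding XE_def by (rule norm_block_sq)
    also have "\<dots> \<le> (\<Sum>i\<in>UNIV. \<Sum>j\<in>UNIV. (cE i j)^2 * C^2)"
    proof (intro sum_mono mult_left_mono)
      fix i j
      have "0 \<le> frob_norm (block G' i j)" by (simp add: frob_norm_def sum_nonneg)
      then show "(frob_norm (block G' i j))^2 \<le> C^2" using G'b by (intro power_mono) auto
    qed simp
    also have "\<dots> = (\<Sum>i\<in>UNIV. C^2 * ((d' i - d i)^2 * S2 i / ((d i)^2 * (d i + (d' i - d i))^2)))"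
    proof (rule sum.cong[OF refl])
      fix i
      show "(\<Sum>j\<in>UNIV. (cE i j)^2 * C^2) = C^2 * ((d' i - d i)^2 * S2 i / ((d i)^2 * (d i + (d' i - d i))^2))"
      proof -
        define K where "K = C^2 * (d' i - d i)^2 / ((d i)^2 * (d' i)^2)"
        have di: "d i \<noteq> 0" "d' i \<noteq> 0" using dpos[of i] d'pos[of i] by auto
        have "(\<Sum>j\<in>UNIV. (cE i j)^2 * C^2) = (\<Sum>j\<in>UNIV. K * (W'$i$j)^2)"
        proof (rule sum.cong[OF refl])
          fix j
          show "(cE i j)^2 * C^2 = K * (W'$i$j)^2"
            unfolding cE_def K_def using di by (simp add: power_mult_distrib power_divide)
        qed
        also have "\<dots> = K * S2 i" by (simp add: S2_def sum_distrib_left)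
        also have "\<dots> = C^2 * ((d' i - d i)^2 * S2 i / ((d i)^2 * (d i + (d' i - d i))^2))"
          by (simp add: K_def)
        finally show ?thesis .
      qed
    qed
    also have "\<dots> \<le> (\<Sum>i\<in>(UNIV::'n set). C^2 * (\<epsilon>^2*C^2/(N*\<gamma>^2*(\<gamma>-\<epsilon>)^2)))"
      by (intro sum_mono mult_left_mono row) simp
    also have "\<dots> = N * (C^2 * (\<epsilon>^2*C^2/(N*\<gamma>^2*(\<gamma>-\<epsilon>)^2)))" by (simp add: N_def)
    also have "\<dots> = (\<epsilon>*C^2/(\<gamma>*(\<gamma>-\<epsilon>)))^2" using aux_eq[of N "\<gamma>-\<epsilon>" \<gamma> C \<epsilon>] Npos g0 ge by simp
    finally show ?thesis .
  qed
  have nE: "norm XE \<le> \<epsilon>*C^2/(\<gamma>*(\<gamma>-\<epsilon>))"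
    by (rule power2_le_imp_le[OF nE2]) (use e0 g0 ge in simp)
  have "op_norm (L_mat W G - L_mat W' G') \<le> norm (L_mat W G - L_mat W' G')" by (rule op_norm_le_norm)
  also have "\<dots> \<le> norm XA + norm XB + norm XE" unfolding dec by (meson norm_triangle_le order_refl add_mono norm_triangle_ineq)
  also have "\<dots> \<le> N * (C/(N*\<gamma>)) * \<eta> + N * (\<epsilon>/(N*\<gamma>)) * C + \<epsilon>*C^2/(\<gamma>*(\<gamma>-\<epsilon>))"
    using nA nB nE by linarith
  also have "\<dots> = (1 / \<gamma>) * C * (\<eta> + \<epsilon>) + \<epsilon> / (\<gamma> * (\<gamma> - \<epsilon>)) * C^2"
    using Npos g0 by (simp add: field_simps)
  finally show ?thesis .
qed


end
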